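(* In the standing setup, fix $\varepsilon>0$ and let $\Sigma$ be the set of subsequences $\alpha=(\alpha_n)$ of $(p_n)$ such that $\ell_n^\alpha<\frac1{12}\frac{\varepsilon}{4^n}$ for all $n$. Define $\xi:\Sigma\to\mathbb R$ by $\xi(\alpha)=\lim_{n\to\infty}\alpha_0\alpha_1\cdots\alpha_n(\infty)$ (this limit exists and is a positive real number). Then the image $\xi(\Sigma)$ is uncountable.
   Context: Standing setup: $\mathbb H$ is the upper half-plane, $\partial\mathbb H=\mathbb R\cup\{\infty\}$; for $v\in T^1\mathbb H$, $v(t)$ is the unit-speed geodesic with initial vector $v$, $v(+\infty)$ its forward endpoint. For a horocycle $\tilde H$ and a parabolic isometry $p$ preserving it, $\ell(\tilde H,p)$ is the horocyclic arc length between $x$ and $px$ ($x\in\tilde H$); positive orientation is that of an arc-length parametrization with $p\tilde H(s)=\tilde H(s+\ell(\tilde H,p))$; $\tilde u$ is tangent to the oriented pair $(\tilde H,p)$ if $\tilde u(\mathbb R^+)$ is tangent to $\tilde H$ at $\tilde u(t_0)=\tilde H(s_0)$, $t_0\ge0$, with $\frac{d\tilde u}{dt}(t_0)=\frac{d\tilde H}{ds}(s_0)$ for a positively oriented parametrization. $\Gamma$ is a torsion-free Fuchsian group, $S=\Gamma\backslash\mathbb H$ has at least one cusp, $u\in T^1S$ is cusp-recurrent with lift $\tilde u$ normalized so that $\tilde u(0)=i$, $\tilde u(+\infty)=\infty$. $(\tilde H_n,p_n)_{n\in\mathbb N}$: $p_n\in\Gamma$ parabolic with fixed point $x_n\in\mathbb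 R$, $\tilde H_n$ horocycle centered at $x_n$, $\tilde u$ tangent to the oriented pair $(\tilde H_n,p_n)$ at $\tilde u(t_n)$, $(t_n)$ nonnegative increasing to $+\infty$, $x_n$ positive distinct increasing to $+\infty$, horoballs bounded by the $\tilde H_n$ pairwise disjoint, $\ell(\tilde H_n,p_n)\to0$. A subsequence $\alpha$ is $\alpha_n=p_{k_n}$ ($k_n$ strictly increasing), $\ell_n^\alpha=\ell(\tilde H_{k_n},p_{k_n})$. *)

theory Defs
  imports "HOL-Analysis.Analysis"
begin

text \<open>Isometries of the upper half-plane are represented by matrices in SL(2,R)
  (A and -A give the same isometry, so Gamma is viewed as a subgroup of PSL(2,R)
  via its preimage in SL(2,R)).\<close>

type_synonym mat2 = "real^2^2"

definition SL2 :: "mat2 set" where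
  "SL2 = {A. det A = 1}"

definition mpow :: "mat2 \<Rightarrow> nat \<Rightarrow> mat2" where
  "mpow A n = ((\<lambda>B. A ** B) ^^ n) (mat 1)"

definition fuchsian :: "mat2 set \<Rightarrow> bool" where
  "fuchsian G \<longleftrightarrow> G \<subseteq> SL2 \<and> mat 1 \<in> G \<and> (\<forall>A\<in>G. \<forall>B\<in>G. A ** B \<in> G)
     \<and> (\<forall>A\<in>G. matrix_inv A \<in> G) \<and> (\<forall>K. bounded K \<longrightarrow> finite (G \<inter> K))"

text \<open>Torsion-free as a subgroup of PSL(2,R): no nontrivial element of finite order.\<close>
definition torsion_free :: "mat2 set \<Rightarrow> bool" where
  "torsion_free G \<longleftrightarrow> (\<forall>A\<in>G. \<forall>n>0. (mpow A n = mat 1 \<or> mpow A n = - mat 1)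
                          \<longrightarrow> (A = mat 1 \<or> A = - mat 1))"

definition parabolic :: "mat2 \<Rightarrow> bool" where
  "parabolic A \<longleftrightarrow> A \<in> SL2 \<and> \<bar>A$1$1 + A$2$2\<bar> = 2 \<and> A \<noteq> mat 1 \<and> A \<noteq> - mat 1"

definition moeb :: "mat2 \<Rightarrow> complex \<Rightarrow> complex" where
  "moeb A z = (of_real (A$1$1) * z + of_real (A$1$2)) / (of_real (A$2$1) * z + of_real (A$2$2))"

text \<open>Action on the boundary \<open>\<real> \<union> {\<infinity>}\<close>, with \<open>None\<close> standing for \<open>\<infinity>\<close>.\<close>
fun moeb_bd :: "mat2 \<Rightarrow> real option \<Rightarrow> real option" where
  "moeb_bd A None = (if A$2$1 = 0 then None else Some (A$1$1 / A$2$1))"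
| "moeb_bd A (Some x) = (if A$2$1 * x + A$2$2 = 0 then None
       else Some ((A$1$1 * x + A$1$2) / (A$2$1 * x + A$2$2)))"

text \<open>The horocycle centred at \<open>x \<in> \<real>\<close> with Euclidean diameter \<open>D > 0\<close>, with its
  (hyperbolic) unit-speed parametrization \<open>s \<mapsto> x - D/(s + i)\<close>, its point set and
  the open horoball it bounds.\<close>
definition horo :: "real \<Rightarrow> real \<Rightarrow> real \<Rightarrow> complex" where
  "horo x D s = of_real x - of_real D / (of_real s + \<i>)"

definition horocycle :: "real \<Rightarrow> real \<Rightarrow> complex set" where
  "horocycle x D = range (horo x D)"

definition horoball :: "real \<Rightarrow> real \<Rightarrow> complex set" where
  "horoball x D = ball (Complex x (D/2)) (D/2)"

text \<open>The signed shift of the parabolic \<open>p\<close> along the horocycle: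
  \<open>p (H(s)) = H(s + \<tau>)\<close>; the horocyclic length \<open>\<ell>(H,p)\<close> is \<open>|\<tau>|\<close>.\<close>
definition horo_shift :: "real \<Rightarrow> real \<Rightarrow> mat2 \<Rightarrow> real" where
  "horo_shift x D p = (THE \<tau>. \<forall>s. moeb p (horo x D s) = horo x D (s + \<tau>))"

definition horo_len :: "real \<Rightarrow> real \<Rightarrow> mat2 \<Rightarrow> real" where
  "horo_len x D p = \<bar>horo_shift x D p\<bar>"

text \<open>Positively oriented arc-length parametrization of the oriented pair \<open>(H,p)\<close>:
  \<open>p H\<^sup>+(s) = H\<^sup>+(s + \<ell>(H,p))\<close>.\<close>
definition horo_pos :: "real \<Rightarrow> real \<Rightarrow> mat2 \<Rightarrow> real \<Rightarrow> complex" where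
  "horo_pos x D p s = horo x D (sgn (horo_shift x D p) * s)"

text \<open>The normalized lift \<open>\<tilde>u\<close>: the unit-speed geodesic with \<open>\<tilde>u(0) = i\<close>,
  \<open>\<tilde>u(+\<infinity>) = \<infinity>\<close>, i.e. \<open>t \<mapsto> i e\<^sup>t\<close>.\<close>
definition u_tilde :: "real \<Rightarrow> complex" where
  "u_tilde t = \<i> * of_real (exp t)"

definition tangent_at :: "real \<Rightarrow> real \<Rightarrow> mat2 \<Rightarrow> real \<Rightarrow> bool" where
  "tangent_at x D p t \<longleftrightarrow> 0 \<le> t \<and> (\<exists>s0 v. u_tilde t = horo_pos x D p s0
      \<and> (u_tilde has_vector_derivative v) (at t)
      \<and> (horo_pos x D p has_vector_derivative v) (at s0))"

fun seqprod :: "(nat \<Rightarrow> mat2) \<Rightarrow> nat \<Rightarrow> mat2" where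
  "seqprod f 0 = f 0"
| "seqprod f (Suc n) = seqprod f n ** f (Suc n)"

text \<open>For a subsequence given by strictly increasing \<open>k\<close>, the points
  \<open>\<alpha>\<^sub>0 \<alpha>\<^sub>1 \<dots> \<alpha>\<^sub>n(\<infinity>)\<close> and \<open>\<xi>(\<alpha>)\<close>.\<close>
definition orbit_pt :: "(nat \<Rightarrow> mat2) \<Rightarrow> (nat \<Rightarrow> nat) \<Rightarrow> nat \<Rightarrow> real option" where
  "orbit_pt p k n = moeb_bd (seqprod (\<lambda>j. p (k j)) n) None"

definition xi :: "(nat \<Rightarrow> mat2) \<Rightarrow> (nat \<Rightarrow> nat) \<Rightarrow> real" where
  "xi p k = lim (\<lambda>n. the (orbit_pt p k n))"

end

theory Submission
  imports Defs
begin



lemma mmult2: "((A::mat2) ** B) $ i $ j = A$i$1 * B$1$j + A$i$2 * B$2$j"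
  by (simp add: matrix_matrix_mult_def sum_2)

lemma frac_aux:
  fixes a b c d u v :: real
  assumes "v \<noteq> 0"
  shows "(c * (u/v) + d = 0) = (c* u + d* v = 0)"
    and "c * (u/v) + d \<noteq> 0 \<Longrightarrow> (a * (u/v) + b) / (c * (u/v) + d) = (a* u + b* v)/(c* u+d* v)"
proof -
  have e: "c * (u/v) + d = (c* u + d* v)/v" using assms by (simp add: field_simps)
  have e2: "a * (u/v) + b = (a* u + b* v)/v" using assms by (simp add: field_simps)
  show "(c * (u/v) + d = 0) = (c* u + d* v = 0)" using e assms by simp
  show "c * (u/v) + d \<noteq> 0 \<Longrightarrow> (a * (u/v) + b) / (c * (u/v) + d) = (a* u + b* v)/(c* u+d* v)"
    using e e2 assms by simp
qed

lemma moeb_bd_comp: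
  assumes "det (A::mat2) \<noteq> 0" "det (B::mat2) \<noteq> 0"
  shows "moeb_bd (A ** B) w = moeb_bd A (moeb_bd B w)"
proof -
  obtain z where zw: "w = None \<and> z = (1::real,0::real) \<or> (\<exists>r. w = Some r \<and> z = (r,1))"
    by (cases w) auto
  define u where "u = B$1$1 * fst z + B$1$2 * snd z"
  define v where "v = B$2$1 * fst z + B$2$2 * snd z"
  have uv: "u \<noteq> 0 \<or> v \<noteq> 0"
  proof (rule ccontr)
    assume "\<not> (u \<noteq> 0 \<or> v \<noteq> 0)"
    hence "u = 0" "v = 0" by auto
    have "det B * fst z = B$2$2 * u - B$1$2 * v" "det B * snd z = B$1$1 * v - B$2$1 * u"
      unfolding det_2 u_def v_def by (simp_all add: algebra_simps)
    hence "det B * fst z = 0" "det B * snd z = 0" using \<open>u = 0\<close> \<open>v = 0\<close> by simp_all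
    thus False using assms(2) zw by auto
  qed
  have bw: "moeb_bd B w = (if v = 0 then None else Some (u / v))"
    using zw by (auto simp: u_def v_def)
  have abw: "moeb_bd (A ** B) w = (if A$2$1 * u + A$2$2 * v = 0 then None
       else Some ((A$1$1 * u + A$1$2 * v) / (A$2$1 * u + A$2$2 * v)))"
    using zw by (auto simp: u_def v_def mmult2 algebra_simps)
  show ?thesis
  proof (cases "v = 0")
    case True
    hence "u \<noteq> 0" using uv by auto
    then show ?thesis using True by (simp add: bw abw)
  next
    case False
    then show ?thesis using frac_aux[OF False] by (simp add: bw abw)
  qed
qed



lemma mat2_eqI: "(A::mat2) $1$1 = B$1$1 \<Longrightarrow> A$1$2 = B$1$2 \<Longrightarrow> A$2$1 = B$2$1 \<Longrightarrow> A$2$2 = B$2$2 \<Longrightarrow> A = B"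
  by (simp add: vec_eq_iff forall_2)

lemma parab_form:
  assumes "parabolic P" "moeb_bd P (Some x) = Some x"
  obtains \<sigma> where "\<sigma> = 1 \<or> \<sigma> = -1" "P$1$1 = \<sigma> + P$2$1 * x" "P$1$2 = - P$2$1 * x^2"
     "P$2$2 = \<sigma> - P$2$1 * x" "P$2$1 \<noteq> 0"
proof -
  define a where "a = P$1$1"
  define b where "b = P$1$2"
  define c where "c = P$2$1"
  define d where "d = P$2$2"
  have det: "a * d - b * c = 1" using assms(1) by (simp add: parabolic_def SL2_def det_2 a_def b_def c_def d_def)
  have tr: "\<bar>a + d\<bar> = 2" using assms(1) by (simp add: parabolic_def a_def d_def)
  define \<mu> where "\<mu> = c * x + d"
  have mu0: "\<mu> \<noteq> 0" and fx: "(a * x + b) / \<mu> = x" using assms(2)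
    by (auto simp: \<mu>_def a_def b_def c_def d_def split: if_splits)
  have fx2: "a * x + b = \<mu> * x" using fx mu0 by (simp add: field_simps)
  have bb: "b = \<mu> * x - a * x" using fx2 by simp
  have dd: "d = \<mu> - c * x" by (simp add: \<mu>_def)
  have "a * \<mu> - \<mu> * x * c = 1" using det unfolding bb dd by (simp add: algebra_simps)
  hence ch: "\<mu>^2 - (a + d) * \<mu> + 1 = 0" unfolding dd by (simp add: algebra_simps power2_eq_square)
  define \<sigma> where "\<sigma> = (a + d) / 2"
  have s: "\<sigma> = 1 \<or> \<sigma> = -1" using tr by (auto simp: \<sigma>_def abs_if split: if_splits)
  have apd: "a + d = 2 * \<sigma>" by (simp add: \<sigma>_def)
  have s2: "\<sigma> * \<sigma> = 1" using s by auto
  have "(\<mu> - \<sigma>)^2 = \<mu>^2 - (a + d) * \<mu> + 1" unfolding apd using s2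
    by (simp add: power2_eq_square algebra_simps)
  hence "(\<mu> - \<sigma>)^2 = 0" using ch by simp
  hence mus: "\<mu> = \<sigma>" by simp
  have A: "a = \<sigma> + c * x" using dd mus apd by linarith
  have B: "b = - c * x^2" using bb A mus by (simp add: algebra_simps power2_eq_square)
  have D: "d = \<sigma> - c * x" using dd mus by simp
  have C: "c \<noteq> 0"
  proof
    assume c0: "c = 0"
    have "P = (if \<sigma> = 1 then mat 1 else - mat 1)"
      by (rule mat2_eqI) (use s A B D c0 in \<open>auto simp: mat_def a_def b_def c_def d_def\<close>)
    thus False using assms(1) s by (auto simp: parabolic_def split: if_splits)
  qed
  show thesis using that[OF s] A B D C by (simp add: a_def b_def c_def d_def)
qed



lemma cnz: "Im z \<noteq> 0 \<Longrightarrow> z \<noteq> 0" by auto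

lemma horo_act:
  fixes P :: mat2
  assumes s: "\<sigma> = 1 \<or> \<sigma> = -1" and A: "P$1$1 = \<sigma> + P$2$1 * x" and B: "P$1$2 = - P$2$1 * x^2"
     and Dd: "P$2$2 = \<sigma> - P$2$1 * x"
  shows "moeb P (horo x D s) = horo x D (s - \<sigma> * P$2$1 * D)"
proof -
  define c where "c = P$2$1"
  define w where "w = complex_of_real s + \<i>"
  have w0: "w \<noteq> 0" by (rule cnz) (simp add: w_def)
  have w1: "w - of_real (\<sigma> * c * D) \<noteq> 0" by (rule cnz) (simp add: w_def)
  have w2: "of_real \<sigma> * w - of_real (c * D) \<noteq> 0" by (rule cnz) (use s in \<open>auto simp: w_def\<close>)
  have lhs: "moeb P (horo x D s) = (of_real (\<sigma> + c * x) * (of_real x - of_real D / w) - of_real (c * x^2))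
     / (of_real c * (of_real x - of_real D / w) + of_real (\<sigma> - c * x))"
    by (simp add: moeb_def horo_def A B Dd c_def w_def)
  have rhs: "horo x D (s - \<sigma> * c * D) = of_real x - of_real D / (w - of_real (\<sigma> * c * D))"
    by (simp add: horo_def w_def)
  have den: "of_real c * (of_real x - of_real D / w) + of_real (\<sigma> - c * x) = (of_real \<sigma> * w - of_real (c * D)) / w"
    using w0 by (simp add: field_simps)
  have num: "of_real (\<sigma> + c * x) * (of_real x - of_real D / w) - of_real (c * x^2)
     = (of_real \<sigma> * (of_real x * w - of_real D) - of_real (c * x * D)) / w"
    using w0 by (simp add: field_simps power2_eq_square)
  have "moeb P (horo x D s) = (of_real \<sigma> * (of_real x * w - of_real D) - of_real (c * x * D)) / (of_real \<sigma> * w - of_real (c * D))"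
    unfolding lhs den num using w0 w2 by (simp add: field_simps)
  also have "\<dots> = of_real x - of_real D / (w - of_real (\<sigma> * c * D))"
    using s w1 w2 by (auto simp: field_simps)
  finally show ?thesis using rhs by (simp add: c_def)
qed



lemma horo_inj: assumes "D \<noteq> 0" "horo x D s1 = horo x D s2" shows "s1 = s2"
proof -
  have n1: "complex_of_real s1 + \<i> \<noteq> 0" "complex_of_real s2 + \<i> \<noteq> 0"
    by (auto simp: complex_eq_iff)
  from assms(2) have "of_real D / (complex_of_real s1 + \<i>) = of_real D / (complex_of_real s2 + \<i>)"
    by (simp add: horo_def)
  hence "complex_of_real s1 + \<i> = complex_of_real s2 + \<i>" using n1 assms(1) by (simp add: field_simps)
  thus ?thesis by (simp add: complex_eq_iff)
qed

lemma shift_eq: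
  assumes "\<And>s. moeb P (horo x D s) = horo x D (s + \<tau>0)" "D \<noteq> 0"
  shows "horo_shift x D P = \<tau>0"
  unfolding horo_shift_def
proof (rule the_equality)
  show "\<forall>s. moeb P (horo x D s) = horo x D (s + \<tau>0)" using assms by simp
  fix \<tau> assume "\<forall>s. moeb P (horo x D s) = horo x D (s + \<tau>)"
  hence "horo x D (0 + \<tau>) = horo x D (0 + \<tau>0)" using assms(1) by metis
  thus "\<tau> = \<tau>0" using horo_inj[OF assms(2)] by simp
qed

lemma tangent_neg:
  assumes "x > 0" "D > 0" "tangent_at x D P t"
  shows "horo_shift x D P < 0"
proof -
  define g where "g = sgn (horo_shift x D P)"
  obtain s0 v where e1: "u_tilde t = horo_pos x D P s0"
    and d1: "(u_tilde has_vector_derivative v) (at t)"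
    and d2: "(horo_pos x D P has_vector_derivative v) (at s0)"
    using assms(3) unfolding tangent_at_def by blast
  define E where "E = exp t"
  have E0: "E > 0" by (simp add: E_def)
  have du: "(u_tilde has_vector_derivative (\<i> * of_real (exp t))) (at t)"
    unfolding u_tilde_def by (auto intro!: derivative_eq_intros)
  define w where "w = complex_of_real (g * s0) + \<i>"
  have w0: "w \<noteq> 0" by (auto simp: w_def complex_eq_iff)
  define h where "h = (\<lambda>z. complex_of_real x - of_real D / (of_real g * z + \<i>))"
  have hp: "horo_pos x D P = (\<lambda>s. h (of_real s))"
    by (auto simp: horo_pos_def horo_def h_def g_def)
  have nz: "of_real g * of_real s0 + \<i> \<noteq> 0" by (auto simp: complex_eq_iff)
  have "(h has_field_derivative (of_real D * of_real g / (of_real g * of_real s0 + \<i>)^2)) (at (of_real s0))"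
    unfolding h_def using nz
    by (auto intro!: derivative_eq_intros simp: power2_eq_square field_simps)
  hence d3: "(horo_pos x D P has_vector_derivative (of_real D * of_real g / w^2)) (at s0)"
    unfolding hp w_def by (auto intro: has_vector_derivative_real_field)
  have v1: "v = \<i> * of_real E" using vector_derivative_unique_at[OF d1 du] by (simp add: E_def)
  have v2: "v = of_real D * of_real g / w^2" using vector_derivative_unique_at[OF d2 d3] .
  have eq1: "\<i> * of_real E = of_real x - of_real D / w"
    using e1 by (simp add: u_tilde_def horo_pos_def horo_def E_def w_def g_def)
  have eq2: "\<i> * of_real E * w^2 = of_real D * of_real g" using v1 v2 w0 by (simp add: field_simps)
  have Dw: "of_real D / w = of_real x - \<i> * of_real E" using eq1 by simp
  have "\<i> * of_real E * of_real D = of_real g * (of_real x - \<i> * of_real E)^2"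
  proof -
    have "(of_real x - \<i> * of_real E) * w = of_real D" using Dw w0 by (simp add: field_simps)
    hence "((of_real x - \<i> * of_real E) * w)^2 = of_real D ^ 2" by simp
    hence "(of_real x - \<i> * of_real E)^2 * w^2 = of_real D ^ 2" by (simp add: power_mult_distrib)
    hence "of_real g * (of_real x - \<i> * of_real E)^2 * w^2 = of_real g * of_real D ^ 2" by simp
    also have "\<dots> = \<i> * of_real E * w^2 * of_real D" using eq2 by (simp add: power2_eq_square)
    finally show ?thesis using w0 by (simp add: field_simps)
  qed
  hence "Im (\<i> * of_real E * of_real D) = Im (of_real g * (of_real x - \<i> * of_real E)^2)" by simp
  hence "E * D = g * (- 2 * x * E)" by (simp add: power2_eq_square)
  hence "E * (D + 2 * g * x) = 0" by (simp add: algebra_simps)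
  hence "D + 2 * g * x = 0" using E0 by simp
  hence "D = - 2 * g * x" by simp
  hence "g < 0"
  proof -
    assume DD: "D = - 2 * g * x"
    show "g < 0"
    proof (rule ccontr)
      assume "\<not> g < 0"
      hence "g * x \<ge> 0" using assms(1) by simp
      thus False using DD assms(2) by simp
    qed
  qed
  thus ?thesis by (simp add: g_def sgn_if split: if_splits)
qed


lemma gen_param:
  assumes "parabolic P" "moeb_bd P (Some x) = Some x" "x > 0" "D > 0" "tangent_at x D P t"
  shows "\<exists>a>0. horo_len x D P = a * D \<and> moeb_bd P None = Some (x + 1/a)
     \<and> (\<forall>z>x. moeb_bd P (Some z) = Some (x + 1/(1/(z-x) + a))) \<and> det P = 1"
proof -
  obtain \<sigma> where s: "\<sigma> = 1 \<or> \<sigma> = -1" and A: "P$1$1 = \<sigma> + P$2$1 * x" and B: "P$1$2 = - P$2$1 * x^2"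
     and Dd: "P$2$2 = \<sigma> - P$2$1 * x" and c0: "P$2$1 \<noteq> 0"
    using parab_form[OF assms(1,2)] by metis
  define c where "c = P$2$1"
  have "horo_shift x D P = - \<sigma> * c * D"
    using shift_eq[of P x D "- \<sigma> * c * D"] horo_act[OF s A B Dd] assms(4) by (simp add: c_def)
  hence neg: "- \<sigma> * c * D < 0" using tangent_neg[OF assms(3,4,5)] by simp
  define a where "a = \<sigma> * c"
  have a0: "a > 0"
  proof -
    have "0 < (\<sigma> * c) * D" using neg by simp
    thus ?thesis using assms(4) zero_less_mult_pos2 a_def by blast
  qed
  have hl: "horo_len x D P = a * D"
  proof -
    have "- \<sigma> * c * D = - (a * D)" by (simp add: a_def)
    thus ?thesis unfolding horo_len_def \<open>horo_shift x D P = - \<sigma> * c * D\<close> using a0 assms(4)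
      by simp
  qed
  have detP: "det P = 1" using assms(1) by (simp add: parabolic_def SL2_def)
  have ss: "\<sigma> * \<sigma> = 1" using s by auto
  have nn: "moeb_bd P None = Some (x + 1/a)"
    using s c0 A by (auto simp: a_def c_def field_simps)
  have sm: "moeb_bd P (Some z) = Some (x + 1/(1/(z-x) + a))" if zx: "z > x" for z
  proof -
    have zx0: "z - x > 0" using zx by simp
    have e1: "P$2$1 * z + P$2$2 = \<sigma> * (1 + a * (z - x))" using Dd s
      by (auto simp: a_def c_def algebra_simps)
    have pos: "1 + a * (z - x) > 0" using a0 zx0 by (simp add: add_pos_pos)
    have e2: "P$1$1 * z + P$1$2 = \<sigma> * x * (1 + a * (z - x)) + \<sigma> * (z - x)"
      using A B s by (auto simp: a_def c_def algebra_simps power2_eq_square)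
    have "(P$1$1 * z + P$1$2) / (P$2$1 * z + P$2$2) = x + (z - x) / (1 + a * (z - x))"
      unfolding e1 e2 using s pos by (auto simp: field_simps)
    also have "\<dots> = x + 1/(1/(z-x) + a)" using zx0 pos by (simp add: field_simps)
    finally show ?thesis using e1 pos s by auto
  qed
  show ?thesis using a0 hl nn sm detP by blast
qed



definition gg :: "(nat \<Rightarrow> real) \<Rightarrow> (nat \<Rightarrow> real) \<Rightarrow> nat \<Rightarrow> real \<Rightarrow> real" where
  "gg x a j z = x j + 1 / (1 / (z - x j) + a j)"

fun Pc :: "(nat \<Rightarrow> real) \<Rightarrow> (nat \<Rightarrow> real) \<Rightarrow> (nat \<Rightarrow> nat) \<Rightarrow> nat \<Rightarrow> real \<Rightarrow> real" where
  "Pc x a k 0 z = z"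
| "Pc x a k (Suc n) z = Pc x a k n (gg x a (k n) z)"

definition vv :: "(nat \<Rightarrow> real) \<Rightarrow> (nat \<Rightarrow> real) \<Rightarrow> (nat \<Rightarrow> nat) \<Rightarrow> nat \<Rightarrow> real" where
  "vv x a k n = Pc x a k n (x (k n) + 1 / a (k n))"

lemma gg_bounds:
  assumes "a j > 0" "z > x j"
  shows "x j < gg x a j z" "gg x a j z < x j + 1 / a j"
proof -
  have p: "1 / (z - x j) > 0" using assms by simp
  have q: "1 / (z - x j) + a j > a j" using p by simp
  have q0: "1 / (z - x j) + a j > 0" by (rule add_pos_pos[OF p assms(1)])
  show "x j < gg x a j z" using q0 by (simp add: gg_def)
  have "1 / (1 / (z - x j) + a j) < 1 / a j"
    using divide_strict_left_mono[OF q zero_less_one mult_pos_pos[OF q0 assms(1)]] .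
  thus "gg x a j z < x j + 1 / a j" by (simp add: gg_def)
qed

lemma gg_mono:
  assumes "a j > 0" "z > x j" "z < z'"
  shows "gg x a j z < gg x a j z'"
proof -
  have p: "1 / (z' - x j) > 0" using assms by simp
  have "1 / (z' - x j) < 1 / (z - x j)" using assms by (simp add: divide_strict_left_mono)
  moreover have q1: "1 / (z - x j) + a j > 0" using assms by (simp add: add_pos_pos)
  moreover have q2: "1 / (z' - x j) + a j > 0" using p assms by (simp add: add_pos_pos)
  ultimately have "1 / (1 / (z - x j) + a j) < 1 / (1 / (z' - x j) + a j)"
    by (intro divide_strict_left_mono) (auto intro: mult_pos_pos)
  thus ?thesis by (simp add: gg_def)
qed

lemma gg_cont:
  assumes "a j > 0" "z > x j"
  shows "isCont (gg x a j) z"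
proof -
  have p: "1 / (z - x j) + a j > 0" using assms by (simp add: add_pos_pos)
  show ?thesis unfolding gg_def using assms p
    by (auto intro!: continuous_intros)
qed

lemma xk_mono:
  assumes "strict_mono x" "strict_mono k" "i < j"
  shows "x (k i) < x (k j)"
  using assms by (simp add: strict_mono_def)

lemma xk_mono_le:
  assumes "strict_mono x" "strict_mono k" "i \<le> j"
  shows "x (k i) \<le> x (k j)"
  using assms xk_mono[OF assms(1,2)] by (metis order_le_less)

lemma Pc_mono:
  assumes a: "\<And>j. a j > 0" and sx: "strict_mono x" and sk: "strict_mono k"
  shows "(\<forall>i<n. x (k i) < z) \<Longrightarrow> z < z' \<Longrightarrow> Pc x a k n z < Pc x a k n z'"
proof (induction n arbitrary: z z')
  case 0
  then show ?case by simp
next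
  case (Suc n)
  have zn: "z > x (k n)" using Suc.prems by simp
  have "\<forall>i<n. x (k i) < gg x a (k n) z"
    using gg_bounds(1)[where x=x and a=a and j="k n", OF a[of "k n"] zn] xk_mono[OF sx sk] by (meson order.strict_trans)
  moreover have "gg x a (k n) z < gg x a (k n) z'" using gg_mono[where x=x and a=a and j="k n", OF a[of "k n"] zn Suc.prems(2)] .
  ultimately show ?case using Suc.IH by simp
qed

lemma Pc_lower:
  assumes a: "\<And>j. a j > 0" and sx: "strict_mono x" and sk: "strict_mono k"
  shows "(\<forall>i\<le>n. x (k i) < z) \<Longrightarrow> x (k 0) < Pc x a k n z"
proof (induction n arbitrary: z)
  case 0
  then show ?case by simp
next
  case (Suc n)
  have zn: "z > x (k n)" using Suc.prems by simp
  have "\<forall>i\<le>n. x (k i) < gg x a (k n) z"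
    using gg_bounds(1)[where x=x and a=a and j="k n", OF a[of "k n"] zn] xk_mono_le[OF sx sk] by (meson order.strict_trans1)
  thus ?case using Suc.IH by simp
qed

lemma Pc_cont:
  assumes a: "\<And>j. a j > 0" and sx: "strict_mono x" and sk: "strict_mono k"
  shows "(\<forall>i<n. x (k i) < z) \<Longrightarrow> isCont (Pc x a k n) z"
proof (induction n arbitrary: z)
  case 0
  then show ?case by simp
next
  case (Suc n)
  have zn: "z > x (k n)" using Suc.prems by simp
  have "\<forall>i<n. x (k i) < gg x a (k n) z"
    using gg_bounds(1)[where x=x and a=a and j="k n", OF a[of "k n"] zn] xk_mono[OF sx sk] by (meson order.strict_trans)
  hence "isCont (Pc x a k n) (gg x a (k n) z)" using Suc.IH by simp
  hence "isCont (\<lambda>z. Pc x a k n (gg x a (k n) z)) z" using isCont_o2 gg_cont[where x=x and a=a and j="k n", OF a[of "k n"] zn] by blast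
  thus ?case by simp
qed

lemma vv_lower:
  assumes a: "\<And>j. a j > 0" and sx: "strict_mono x" and sk: "strict_mono k"
  shows "x (k 0) < vv x a k n"
proof -
  have "x (k n) < x (k n) + 1 / a (k n)" using a[of "k n"] by simp
  hence "\<forall>i\<le>n. x (k i) < x (k n) + 1 / a (k n)"
    using xk_mono_le[OF sx sk] by (meson order.strict_trans1)
  thus ?thesis unfolding vv_def by (rule Pc_lower[where a=a and x=x and k=k, OF a sx sk])
qed

lemma vv_dec:
  assumes a: "\<And>j. a j > 0" and sx: "strict_mono x" and sk: "strict_mono k"
  shows "vv x a k (Suc n) \<le> vv x a k n"
proof -
  have z1: "x (k (Suc n)) + 1 / a (k (Suc n)) > x (k n)"
  proof -
    have "0 < 1 / a (k (Suc n))" using a[of "k (Suc n)"] by simp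
    thus ?thesis using xk_mono[OF sx sk, of n "Suc n"] by linarith
  qed
  have l: "gg x a (k n) (x (k (Suc n)) + 1 / a (k (Suc n))) < x (k n) + 1 / a (k n)"
    using gg_bounds(2)[where x=x and a=a and j="k n", OF a[of "k n"] z1] .
  have "\<forall>i<n. x (k i) < gg x a (k n) (x (k (Suc n)) + 1 / a (k (Suc n)))"
    using gg_bounds(1)[where x=x and a=a and j="k n", OF a[of "k n"] z1] xk_mono[OF sx sk] by (meson order.strict_trans)
  hence "Pc x a k n (gg x a (k n) (x (k (Suc n)) + 1 / a (k (Suc n)))) < Pc x a k n (x (k n) + 1 / a (k n))"
    by (rule Pc_mono[where a=a and x=x and k=k, OF a sx sk _ l])
  thus ?thesis by (simp add: vv_def)
qed

lemma vv_conv: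
  assumes a: "\<And>j. a j > 0" and sx: "strict_mono x" and sk: "strict_mono k"
  obtains L where "vv x a k \<longlonglongrightarrow> L" "\<forall>i. L \<le> vv x a k i" "x (k 0) \<le> L"
proof -
  have "decseq (vv x a k)" using vv_dec[OF a sx sk] by (simp add: decseq_SucI)
  moreover have "\<forall>i. x (k 0) \<le> vv x a k i" using vv_lower[where a=a and x=x and k=k, OF a sx sk] less_imp_le by metis
  ultimately obtain L where L: "vv x a k \<longlonglongrightarrow> L" "\<forall>i. L \<le> vv x a k i"
    using decseq_convergent by blast
  have "x (k 0) \<le> L" using LIMSEQ_le_const[OF L(1)] \<open>\<forall>i. x (k 0) \<le> vv x a k i\<close> by blast
  thus thesis using that L by blast
qed

lemma Pc_split: "Pc x a k (j + n) z = Pc x a k j (Pc x a (\<lambda>i. k (j + i)) n z)"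
  by (induction n arbitrary: z) auto

lemma vv_split: "vv x a k (j + n) = Pc x a k j (vv x a (\<lambda>i. k (j + i)) n)"
  by (simp add: vv_def Pc_split)

lemma Pc_prefix: "(\<forall>i<j. k i = k' i) \<Longrightarrow> Pc x a k j = Pc x a k' j"
proof (induction j)
  case 0
  then show ?case by (simp add: fun_eq_iff)
next
  case (Suc j)
  then show ?case by (simp add: fun_eq_iff)
qed

lemma vv_lim_split:
  assumes a: "\<And>j. a j > 0" and sx: "strict_mono x" and sk: "strict_mono k"
  assumes L: "vv x a (\<lambda>i. k (j + i)) \<longlonglongrightarrow> L" "x (k j) \<le> L"
  shows "vv x a k \<longlonglongrightarrow> Pc x a k j L"
proof -
  have "\<forall>i<j. x (k i) < L" using xk_mono[OF sx sk] L(2) by (meson order.strict_trans2)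
  hence c: "isCont (Pc x a k j) L" by (rule Pc_cont[where a=a and x=x and k=k, OF a sx sk])
  have "(\<lambda>n. Pc x a k j (vv x a (\<lambda>i. k (j + i)) n)) \<longlonglongrightarrow> Pc x a k j L"
    using isCont_tendsto_compose[OF c L(1)] .
  moreover have "(\<lambda>n. vv x a k (n + j)) = (\<lambda>n. Pc x a k j (vv x a (\<lambda>i. k (j + i)) n))"
    by (rule ext) (metis add.commute vv_split)
  ultimately have "(\<lambda>n. vv x a k (n + j)) \<longlonglongrightarrow> Pc x a k j L" by simp
  thus ?thesis by (rule LIMSEQ_offset)
qed

lemma shift_sm:
  fixes k :: "nat \<Rightarrow> nat" and j :: nat
  assumes "strict_mono k" shows "strict_mono (\<lambda>i. k (j + i))"
proof (rule strict_monoI)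
  fix m n :: nat assume "m < n"
  hence "j + m < j + n" by simp
  thus "k (j + m) < k (j + n)" by (rule strict_monoD[OF assms])
qed

lemma compare:
  assumes a: "\<And>j. a j > 0" and sx: "strict_mono x" and sk: "strict_mono k" and sk': "strict_mono k'"
    and pre: "\<forall>i<j. k i = k' i" and sep: "x (k' j) > x (k j) + 1 / a (k j)"
  shows "lim (vv x a k) < lim (vv x a k')"
proof -
  obtain L1 where L1: "vv x a (\<lambda>i. k (j + i)) \<longlonglongrightarrow> L1" "\<forall>i. L1 \<le> vv x a (\<lambda>i. k (j + i)) i"
      "x (k j) \<le> L1"
    using vv_conv[of a x, OF a sx shift_sm[OF sk, of j]] by auto
  obtain L2 where L2: "vv x a (\<lambda>i. k' (j + i)) \<longlonglongrightarrow> L2" "x (k' j) \<le> L2"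
    using vv_conv[of a x, OF a sx shift_sm[OF sk', of j]] by auto
  have "L1 \<le> x (k j) + 1 / a (k j)" using L1(2)[rule_format, of 0] by (simp add: vv_def)
  hence L12: "L1 < L2" using sep L2(2) by linarith
  have e1: "lim (vv x a k) = Pc x a k j L1" by (rule limI[OF vv_lim_split[where a=a and x=x and k=k, OF a sx sk L1(1) L1(3)]])
  have e2: "lim (vv x a k') = Pc x a k' j L2" by (rule limI[OF vv_lim_split[where a=a and x=x and k=k', OF a sx sk' L2(1) L2(2)]])
  have "\<forall>i<j. x (k i) < L1" using xk_mono[OF sx sk] L1(3) by (meson order.strict_trans2)
  hence "Pc x a k j L1 < Pc x a k j L2" by (rule Pc_mono[where a=a and x=x and k=k, OF a sx sk _ L12])
  thus ?thesis using e1 e2 Pc_prefix[OF pre] by simp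
qed


lemma orbit_vv:
  fixes p :: "nat \<Rightarrow> mat2"
  assumes sx: "strict_mono x" and sk: "strict_mono k" and a: "\<And>j. a j > 0"
    and dt: "\<And>j. det (p j) = 1" and pn: "\<And>j. moeb_bd (p j) None = Some (x j + 1 / a j)"
    and ps: "\<And>j z. z > x j \<Longrightarrow> moeb_bd (p j) (Some z) = Some (gg x a j z)"
  shows "det (seqprod (\<lambda>j. p (k j)) n) = 1 \<and> moeb_bd (seqprod (\<lambda>j. p (k j)) n) None = Some (vv x a k n)
     \<and> (\<forall>z. x (k n) < z \<longrightarrow> moeb_bd (seqprod (\<lambda>j. p (k j)) n) (Some z) = Some (Pc x a k (Suc n) z))"
proof (induction n)
  case 0
  then show ?case using dt pn ps by (simp add: vv_def)
next
  case (Suc n)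
  define S where "S = seqprod (\<lambda>j. p (k j)) n"
  have IH1: "det S = 1" and IH3: "\<And>z. x (k n) < z \<Longrightarrow> moeb_bd S (Some z) = Some (Pc x a k (Suc n) z)"
    using Suc.IH by (auto simp: S_def)
  have eq: "seqprod (\<lambda>j. p (k j)) (Suc n) = S ** p (k (Suc n))" by (simp add: S_def)
  have comp: "moeb_bd (seqprod (\<lambda>j. p (k j)) (Suc n)) w = moeb_bd S (moeb_bd (p (k (Suc n))) w)" for w
    unfolding eq by (rule moeb_bd_comp) (simp_all add: IH1 dt)
  have xx: "x (k n) < x (k (Suc n))" using xk_mono[OF sx sk, of n "Suc n"] by simp
  have d: "det (seqprod (\<lambda>j. p (k j)) (Suc n)) = 1" unfolding eq by (simp add: det_mul IH1 dt)
  have y1: "x (k (Suc n)) < x (k (Suc n)) + 1 / a (k (Suc n))" using a[of "k (Suc n)"] by simp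
  have nn: "moeb_bd (seqprod (\<lambda>j. p (k j)) (Suc n)) None = Some (vv x a k (Suc n))"
    unfolding comp pn using IH3[of "x (k (Suc n)) + 1 / a (k (Suc n))"] y1 xx by (simp add: vv_def)
  have ss: "moeb_bd (seqprod (\<lambda>j. p (k j)) (Suc n)) (Some z) = Some (Pc x a k (Suc (Suc n)) z)"
    if z: "x (k (Suc n)) < z" for z
  proof -
    have g1: "x (k (Suc n)) < gg x a (k (Suc n)) z"
      by (rule gg_bounds(1)[where x=x and a=a and j="k (Suc n)", OF a[of "k (Suc n)"] z])
    show ?thesis unfolding comp ps[OF z] using IH3[of "gg x a (k (Suc n)) z"] g1 xx by simp
  qed
  show ?case using d nn ss by blast
qed

lemma cantor_nat_set: "\<not> countable (UNIV :: nat set set)"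
proof
  assume c: "countable (UNIV :: nat set set)"
  have "UNIV \<noteq> ({} :: nat set set)" by simp
  then obtain f :: "nat \<Rightarrow> nat set" where f: "range f = UNIV"
    using c uncountable_def[of "UNIV :: nat set set"] by auto
  have "{i. i \<notin> f i} \<in> range f" using f by simp
  then obtain n where n: "{i. i \<notin> f i} = f n" by auto
  have "n \<in> f n \<longleftrightarrow> n \<notin> f n" by (subst (2) n[symmetric]) simp
  thus False by simp
qed

theorem mainTheorem11:
  fixes G :: "mat2 set" and p :: "nat \<Rightarrow> mat2" and x D t :: "nat \<Rightarrow> real"
    and \<epsilon> :: real and Sigma :: "(nat \<Rightarrow> nat) set"
  assumes "fuchsian G" and "torsion_free G"
    and "\<And>n. p n \<in> G" and "\<And>n. parabolic (p n)"
    and "\<And>n. moeb_bd (p n) (Some (x n)) = Some (x n)"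
    and "\<And>n. D n > 0"
    and "\<And>n. moeb (p n) ` horocycle (x n) (D n) = horocycle (x n) (D n)"
    and "\<And>n. tangent_at (x n) (D n) (p n) (t n)"
    and "\<And>n. 0 \<le> t n" and "mono t" and "filterlim t at_top sequentially"
    and "\<And>n. 0 < x n" and "strict_mono x" and "filterlim x at_top sequentially"
    and "\<And>m n. m \<noteq> n \<Longrightarrow> horoball (x m) (D m) \<inter> horoball (x n) (D n) = {}"
    and "(\<lambda>n. horo_len (x n) (D n) (p n)) \<longlonglongrightarrow> 0"
    and "\<epsilon> > 0"
    and "Sigma = {k. strict_mono k \<and>
           (\<forall>n. horo_len (x (k n)) (D (k n)) (p (k n)) < (1/12) * (\<epsilon> / 4 ^ n))}"
  shows "(\<forall>k\<in>Sigma. (\<forall>\<^sub>F n in sequentially. orbit_pt p k n \<noteq> None)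
            \<and> (\<lambda>n. the (orbit_pt p k n)) \<longlonglongrightarrow> xi p k \<and> xi p k > 0)
         \<and> uncountable (xi p ` Sigma)"
proof -
  note sx = assms(13)
  have "\<forall>n. \<exists>b>0. horo_len (x n) (D n) (p n) = b * D n \<and> moeb_bd (p n) None = Some (x n + 1/b)
     \<and> (\<forall>z>x n. moeb_bd (p n) (Some z) = Some (x n + 1/(1/(z - x n) + b))) \<and> det (p n) = 1"
    using gen_param[OF assms(4) assms(5) assms(12) assms(6) assms(8)] by blast
  then obtain a where aa: "\<And>n. a n > 0 \<and> horo_len (x n) (D n) (p n) = a n * D n \<and> moeb_bd (p n) None = Some (x n + 1/a n)
     \<and> (\<forall>z>x n. moeb_bd (p n) (Some z) = Some (x n + 1/(1/(z - x n) + a n))) \<and> det (p n) = 1"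
    by metis
  have a: "\<And>n. a n > 0" using aa by blast
  have dt: "\<And>j. det (p j) = 1" using aa by blast
  have pn: "\<And>j. moeb_bd (p j) None = Some (x j + 1 / a j)" using aa by blast
  have ps: "\<And>j z. z > x j \<Longrightarrow> moeb_bd (p j) (Some z) = Some (gg x a j z)"
    using aa unfolding gg_def by blast
  have orb: "\<And>k n. strict_mono k \<Longrightarrow> orbit_pt p k n = Some (vv x a k n)"
    unfolding orbit_pt_def using orbit_vv[OF sx _ a dt pn ps] by blast
  have xiv: "\<And>k. strict_mono k \<Longrightarrow> xi p k = lim (vv x a k)"
    unfolding xi_def using orb by simp
  have part1: "\<forall>k\<in>Sigma. (\<forall>\<^sub>F n in sequentially. orbit_pt p k n \<noteq> None)
            \<and> (\<lambda>n. the (orbit_pt p k n)) \<longlonglongrightarrow> xi p k \<and> xi p k > 0"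
  proof
    fix k assume "k \<in> Sigma"
    hence sk: "strict_mono k" using assms(18) by blast
    obtain L where L: "vv x a k \<longlonglongrightarrow> L" "x (k 0) \<le> L"
      using vv_conv[of a x k, OF a sx sk] by blast
    have e: "(\<lambda>n. the (orbit_pt p k n)) = vv x a k" using orb[OF sk] by (simp add: fun_eq_iff)
    have xl: "xi p k = L" using xiv[OF sk] limI[OF L(1)] by simp
    have "0 < x (k 0)" using assms(12) by blast
    thus "(\<forall>\<^sub>F n in sequentially. orbit_pt p k n \<noteq> None)
            \<and> (\<lambda>n. the (orbit_pt p k n)) \<longlonglongrightarrow> xi p k \<and> xi p k > 0"
      using orb[OF sk] e L xl by simp
  qed
  define hl where "hl = (\<lambda>n. horo_len (x n) (D n) (p n))"
  define bnd where "bnd j = (1/12) * (\<epsilon> / 4 ^ j)" for j :: nat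
  have bpos: "bnd j > 0" for j using assms(17) by (simp add: bnd_def)
  have bmono: "bnd i \<le> bnd n" if "n \<le> i" for i n
  proof -
    have "(4::real) ^ n \<le> 4 ^ i" using that by (simp add: power_increasing)
    hence "\<epsilon> / 4 ^ i \<le> \<epsilon> / 4 ^ n" using assms(17) by (simp add: divide_left_mono)
    thus ?thesis by (simp add: bnd_def)
  qed
  have hl0: "hl \<longlonglongrightarrow> 0" using assms(16) by (simp add: hl_def)
  have step: "\<exists>N. N > prev \<and> hl N < bnd j \<and> x N > x prev + 1 / a prev" for j prev
  proof -
    have e1: "\<forall>\<^sub>F N in sequentially. hl N < bnd j" using order_tendstoD(2)[OF hl0 bpos] .
    have e2: "\<forall>\<^sub>F N in sequentially. x N > x prev + 1 / a prev"
      using assms(14) unfolding filterlim_at_top_dense by blast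
    have e3: "\<forall>\<^sub>F N in sequentially. N > prev" by (rule eventually_gt_at_top)
    have "\<forall>\<^sub>F N in sequentially. N > prev \<and> hl N < bnd j \<and> x N > x prev + 1 / a prev"
      using e1 e2 e3 by eventually_elim blast
    then obtain N0 where N0: "\<forall>n\<ge>N0. n > prev \<and> hl n < bnd j \<and> x n > x prev + 1 / a prev"
      unfolding eventually_sequentially by blast
    show ?thesis using N0[rule_format, of N0] by blast
  qed
  have step0: "\<exists>N. hl N < bnd 0" using step by blast
  define m where "m = rec_nat (SOME N. hl N < bnd 0)
      (\<lambda>j prev. SOME N. N > prev \<and> hl N < bnd (Suc j) \<and> x N > x prev + 1 / a prev)"
  have m0: "hl (m 0) < bnd 0" unfolding m_def using someI_ex[OF step0] by simp
  have mS: "m (Suc j) > m j \<and> hl (m (Suc j)) < bnd (Suc j) \<and> x (m (Suc j)) > x (m j) + 1 / a (m j)" for j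
  proof -
    have "m (Suc j) = (SOME N. N > m j \<and> hl N < bnd (Suc j) \<and> x N > x (m j) + 1 / a (m j))"
      unfolding m_def by simp
    thus ?thesis using someI_ex[OF step[of "m j" "Suc j"]] by simp
  qed
  have mb: "hl (m j) < bnd j" for j using m0 mS by (cases j) auto
  have sm: "strict_mono m" using mS by (simp add: strict_mono_Suc_iff)
  define kS where "kS S j = m (2 * j + (if j \<in> S then 1 else 0))" for S :: "nat set" and j
  have kSm: "strict_mono (kS S)" for S
  proof -
    have "2 * j + (if j \<in> S then 1 else 0) < 2 * Suc j + (if Suc j \<in> S then 1 else 0)" for j :: nat
      by simp
    thus ?thesis unfolding kS_def strict_mono_Suc_iff using strict_monoD[OF sm] by blast
  qed
  have kSS: "kS S \<in> Sigma" for S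
  proof -
    have "hl (kS S n) < bnd n" for n
    proof -
      have "n \<le> 2 * n + (if n \<in> S then 1 else 0)" by simp
      thus ?thesis unfolding kS_def using mb bmono by (meson less_le_trans)
    qed
    thus ?thesis using kSm assms(18) by (simp add: hl_def bnd_def)
  qed
  have cmp: "xi p (kS S) < xi p (kS T)" if "j \<notin> S" "j \<in> T" "\<forall>i<j. (i \<in> S) = (i \<in> T)" for S T j
  proof -
    have pre: "\<forall>i<j. kS S i = kS T i" using that(3) by (simp add: kS_def)
    have sep: "x (kS T j) > x (kS S j) + 1 / a (kS S j)"
      using mS[of "2 * j"] that(1,2) by (simp add: kS_def)
    show ?thesis using compare[of a x "kS S" "kS T" j, OF a sx kSm kSm pre sep] xiv[OF kSm] by simp
  qed
  have inj: "inj_on (\<lambda>S. xi p (kS S)) UNIV"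
  proof (rule inj_onI)
    fix S T assume eq: "xi p (kS S) = xi p (kS T)"
    show "S = T"
    proof (rule ccontr)
      assume "S \<noteq> T"
      hence "\<exists>j. (j \<in> S) \<noteq> (j \<in> T)" by blast
      define j where "j = (LEAST j. (j \<in> S) \<noteq> (j \<in> T))"
      have j1: "(j \<in> S) \<noteq> (j \<in> T)" unfolding j_def by (rule LeastI_ex) fact
      have j2: "\<forall>i<j. (i \<in> S) = (i \<in> T)" unfolding j_def using not_less_Least by blast
      show False
      proof (cases "j \<in> S")
        case True
        hence "xi p (kS T) < xi p (kS S)" using cmp[of j T S] j1 j2 by auto
        thus False using eq by simp
      next
        case False
        hence "xi p (kS S) < xi p (kS T)" using cmp[of j S T] j1 j2 by auto
        thus False using eq by simp
      qed
    qed
  qed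
  have "uncountable (xi p ` Sigma)"
  proof
    assume c: "countable (xi p ` Sigma)"
    have "(\<lambda>S. xi p (kS S)) ` UNIV \<subseteq> xi p ` Sigma" using kSS by blast
    hence "countable ((\<lambda>S. xi p (kS S)) ` UNIV)" using c countable_subset by blast
    hence "countable (UNIV :: nat set set)" using countable_image_inj_on inj by blast
    thus False using cantor_nat_set by blast
  qed
  thus ?thesis using part1 by blast
qed

end
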